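(* Let $n$ be a square-free integer with $n\neq 1$. For every $(a,b,c)\in A(n)$ there exists $g\in H(2)$ such that $g(a,b,c)\in B(n)$, where $B(n)=\{(a,b,c)\in A(n): |a|\leq|b|,\ |a|\leq|c|\}$.
   Context: $A(n)=\{(a,b,c)\in\mathbb{Z}^3: bc=a^2-n\}$, in bijection with $\mathbb{Q}^*(\sqrt n)=\{\frac{a+\sqrt n}{c}: a,c\in\mathbb Z, c\neq 0, \frac{a^2-n}{c}\in\mathbb Z\}$ via $\frac{a+\sqrt n}{c}\mapsto (a,\frac{a^2-n}{c},c)$. $H(2)$ is the group generated by $x:z\mapsto -1/z$ and $w_2:z\mapsto z+2$, acting on triples by $x(a,b,c)=(-a,c,b)$ and $w_{2k}(a,b,c)=(a+2kc,\,4ka+b+4k^2c,\,c)$ for $k\in\mathbb Z$. *)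

theory Defs
  imports Main "HOL-Computational_Algebra.Squarefree"
begin

type_synonym triple = "int \<times> int \<times> int"

definition A :: "int \<Rightarrow> triple set" where
  "A n = {(a,b,c). b * c = a^2 - n}"

definition B :: "int \<Rightarrow> triple set" where
  "B n = {(a,b,c). (a,b,c) \<in> A n \<and> \<bar>a\<bar> \<le> \<bar>b\<bar> \<and> \<bar>a\<bar> \<le> \<bar>c\<bar>}"

text \<open>Action of x : z |-> -1/z on triples.\<close>
definition act_x :: "triple \<Rightarrow> triple" where
  "act_x t = (case t of (a,b,c) \<Rightarrow> (-a, c, b))"

text \<open>Action of w_{2k} : z |-> z + 2k on triples.\<close>
definition act_w :: "int \<Rightarrow> triple \<Rightarrow> triple" where
  "act_w k t = (case t of (a,b,c) \<Rightarrow> (a + 2*k*c, 4*k*a + b + 4*k^2*c, c))"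

text \<open>Elements of H(2) = <x, w_2> as words in the generators x, w_2 and their inverses
  (x is an involution, w_2^{-1} = w_{-2}); a word acts by composing the generator actions.\<close>
datatype H2word = Id | X H2word | W2 H2word | W2inv H2word

fun H2act :: "H2word \<Rightarrow> triple \<Rightarrow> triple" where
  "H2act Id t = t"
| "H2act (X g) t = act_x (H2act g t)"
| "H2act (W2 g) t = act_w 1 (H2act g t)"
| "H2act (W2inv g) t = act_w (-1) (H2act g t)"

end

theory Submission
  imports Defs
begin

fun comp :: "H2word \<Rightarrow> H2word \<Rightarrow> H2word" where
  "comp Id h = h"
| "comp (X g) h = X (comp g h)"
| "comp (W2 g) h = W2 (comp g h)"
| "comp (W2inv g) h = W2inv (comp g h)"

lemma comp_act: "H2act (comp g h) t = H2act g (H2act h t)"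
  by (induction g) auto

lemma act_w_add: "act_w k (act_w l t) = act_w (k+l) t"
  by (cases t) (auto simp: act_w_def algebra_simps power2_eq_square)

fun wn :: "nat \<Rightarrow> H2word" where
  "wn 0 = Id" | "wn (Suc m) = W2 (wn m)"
fun wi :: "nat \<Rightarrow> H2word" where
  "wi 0 = Id" | "wi (Suc m) = W2inv (wi m)"

lemma act_w0: "act_w 0 t = t"
  by (cases t) (auto simp: act_w_def)

lemma wn_act: "H2act (wn m) t = act_w (int m) t"
  by (induction m) (auto simp: act_w0 act_w_add add.commute)

lemma wi_act: "H2act (wi m) t = act_w (- int m) t"
  by (induction m) (auto simp: act_w0 act_w_add add.commute)

lemma w_word: "\<exists>w. \<forall>t. H2act w t = act_w k t"
proof (cases "k \<ge> 0")
  case True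
  then have "\<forall>t. H2act (wn (nat k)) t = act_w k t" by (simp add: wn_act)
  then show ?thesis by blast
next
  case False
  then have "\<forall>t. H2act (wi (nat (-k))) t = act_w k t" by (simp add: wi_act)
  then show ?thesis by blast
qed

lemma x_word: "H2act (X Id) t = act_x t" by simp

lemma A_w: "(a,b,c) \<in> A n \<Longrightarrow> act_w k (a,b,c) \<in> A n"
  by (auto simp: A_def act_w_def algebra_simps power2_eq_square)

lemma A_x: "(a,b,c) \<in> A n \<Longrightarrow> act_x (a,b,c) \<in> A n"
  by (auto simp: A_def act_x_def algebra_simps)

lemma red: assumes "(c::int) \<noteq> 0" shows "\<exists>k. \<bar>a + 2*k*c\<bar> \<le> \<bar>c\<bar>"
proof -
  define r where "r = a mod (2*c)"
  have "a - (a div (2*c)) * (2*c) = r" unfolding r_def by (rule minus_div_mult_eq_mod)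
  then have ar: "a + 2 * (-(a div (2*c))) * c = r" by (simp add: algebra_simps)
  show ?thesis
  proof (cases "\<bar>r\<bar> \<le> \<bar>c\<bar>")
    case True then show ?thesis using ar by metis
  next
    case False
    have "a + 2 * (-(a div (2*c)) - 1) * c = r - 2*c" using ar by (simp add: algebra_simps)
    moreover have "\<bar>r - 2*c\<bar> \<le> \<bar>c\<bar>"
    proof (cases "c > 0")
      case True
      hence "0 \<le> r" "r < 2*c" unfolding r_def by auto
      then show ?thesis using False by auto
    next
      case f: False
      hence "r \<le> 0" "2*c < r" unfolding r_def using assms by auto
      then show ?thesis using False f by auto
    qed
    ultimately show ?thesis by metis
  qed
qed

lemma c0: assumes "squarefree n" "n \<noteq> 1" "(a::int)^2 = n" shows "a = 0"
proof (rule ccontr)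
  assume "a \<noteq> 0"
  have "a ^ 2 dvd n" using assms(3) by simp
  hence "a dvd 1" using assms(1) by (rule squarefreeD[rotated])
  hence "\<bar>a\<bar> = 1" by simp
  hence "a^2 = 1" by (metis power2_abs power_one)
  thus False using assms by simp
qed

theorem mainTheorem6:
  fixes n a b c :: int
  assumes "squarefree n" and "n \<noteq> 1" and "(a,b,c) \<in> A n"
  shows "\<exists>g :: H2word. H2act g (a,b,c) \<in> B n"
  using assms(3)
proof (induction "nat \<bar>a\<bar>" arbitrary: a b c rule: less_induct)
  case less
  have eq: "b * c = a^2 - n" using less.prems by (simp add: A_def)
  show ?case
  proof (cases "\<bar>a\<bar> \<le> \<bar>b\<bar> \<and> \<bar>a\<bar> \<le> \<bar>c\<bar>")
    case True
    then have "H2act Id (a,b,c) \<in> B n" using less.prems by (simp add: B_def)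
    then show ?thesis by blast
  next
    case False
    show ?thesis
    proof (cases "\<bar>a\<bar> > \<bar>c\<bar>")
      case True
      have "c \<noteq> 0"
      proof
        assume "c = 0"
        then have "a^2 = n" using eq by simp
        then have "a = 0" using c0 assms by blast
        then show False using True \<open>c = 0\<close> by simp
      qed
      obtain k where k: "\<bar>a + 2*k*c\<bar> \<le> \<bar>c\<bar>" using red[OF \<open>c \<noteq> 0\<close>] by blast
      obtain w where w: "\<forall>t. H2act w t = act_w k t" using w_word by blast
      obtain a' b' c' where t': "act_w k (a,b,c) = (a',b',c')" by (metis prod_cases3)
      have a': "a' = a + 2*k*c" using t' by (auto simp: act_w_def)
      have inA: "(a',b',c') \<in> A n" using A_w[OF less.prems, of k] t' by simp
      obtain g where "H2act g (a',b',c') \<in> B n"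
        using less.hyps[OF _ inA] a' k True by fastforce
      then have "H2act (comp g w) (a,b,c) \<in> B n" using comp_act w t' by simp
      then show ?thesis by blast
    next
      case F2: False
      then have True: "\<bar>a\<bar> > \<bar>b\<bar>" using False by auto
      have "b \<noteq> 0"
      proof
        assume "b = 0"
        then have "a^2 = n" using eq by simp
        then have "a = 0" using c0 assms by blast
        then show False using True \<open>b = 0\<close> by simp
      qed
      obtain k where k: "\<bar>-a + 2*k*b\<bar> \<le> \<bar>b\<bar>" using red[OF \<open>b \<noteq> 0\<close>] by blast
      obtain w where w: "\<forall>t. H2act w t = act_w k t" using w_word by blast
      have inX: "(-a,c,b) \<in> A n" using A_x[OF less.prems] by (simp add: act_x_def)
      obtain a' b' c' where t': "act_w k (-a,c,b) = (a',b',c')" by (metis prod_cases3)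
      have a': "a' = -a + 2*k*b" using t' by (auto simp: act_w_def)
      have inA: "(a',b',c') \<in> A n" using A_w[OF inX, of k] t' by simp
      obtain g where "H2act g (a',b',c') \<in> B n"
        using less.hyps[OF _ inA] a' k True by fastforce
      then have "H2act (comp g (comp w (X Id))) (a,b,c) \<in> B n"
        using comp_act w t' by (simp add: act_x_def)
      then show ?thesis by blast
    qed
  qed
qed

end
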